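(* Let $G$ be a graph, $k,\ell\ge1$, $S$ an independent set of size $k$, and $J_0=S,J_1,\dots,J_\ell$ independent sets of $G$. Define $\mathcal{C}_0=\{\{(S,k)\}\}$ and, for $i\in\{1,\dots,\ell\}$, let $\mathcal{C}_i$ contain, for every $C\in\mathcal{C}_{i-1}$ and every constraint $(X,b)\in C$, the constraint set $C'$ consisting of: $(N(X)\cap J_i,1)$; $(X\cap J_i,b-1)$ if $b\ge2$ (nothing if $b=1$); and $(X'\cap J_i,b')$ for every other constraint $(X',b')\in C$. Let $i\in\{0,\dots,\ell\}$. If $Z\subseteq J_i$ is an independent set of size $k$ that satisfies at least one constraint set in $\mathcal{C}_i$, then $Z$ is reachable from $S$ by token slides, i.e., there is a sequence $S=I_0,I_1,\dots,I_m=Z$ of independent sets of size $k$ in $G$ such that each $I_{j+1}=(I_j\setminus\{u\})\cup\{v\}$ for some $u\in I_j$, $v\notin I_j$ with $\{u,v\}\in E(G)$.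
   Context: A constraint is a pair $(X,b)$ with $X\subseteq V(G)$ and $b$ a positive integer. A set $Z\subseteq V(G)$ satisfies $(X,b)$ if $|Z\cap X|=b$, and satisfies a constraint set $C$ if it satisfies every constraint in $C$. For $X\subseteq V(G)$, $N(X)=\{v\notin X: v\text{ adjacent to some }u\in X\}$. In the paper, $J_1,\dots,J_\ell$ are members of an independence covering family for $(G,k)$. *)

theory Defs
  imports Main
begin

definition simple_graph :: "'a set \<Rightarrow> ('a \<Rightarrow> 'a \<Rightarrow> bool) \<Rightarrow> bool" where
  "simple_graph V E \<longleftrightarrow> finite V \<and> (\<forall>u v. E u v \<longrightarrow> u \<in> V \<and> v \<in> V)
     \<and> (\<forall>u v. E u v \<longrightarrow> E v u) \<and> (\<forall>u. \<not> E u u)"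

definition indep :: "'a set \<Rightarrow> ('a \<Rightarrow> 'a \<Rightarrow> bool) \<Rightarrow> 'a set \<Rightarrow> bool" where
  "indep V E I \<longleftrightarrow> I \<subseteq> V \<and> (\<forall>u\<in>I. \<forall>v\<in>I. \<not> E u v)"

definition nbhd :: "'a set \<Rightarrow> ('a \<Rightarrow> 'a \<Rightarrow> bool) \<Rightarrow> 'a set \<Rightarrow> 'a set" where
  "nbhd V E X = {v \<in> V. v \<notin> X \<and> (\<exists>u\<in>X. E u v)}"

type_synonym 'a constr = "'a set \<times> nat"

definition satisfies :: "'a set \<Rightarrow> 'a constr \<Rightarrow> bool" where
  "satisfies Z c \<longleftrightarrow> card (Z \<inter> fst c) = snd c"

definition satisfies_set :: "'a set \<Rightarrow> 'a constr set \<Rightarrow> bool" where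
  "satisfies_set Z C \<longleftrightarrow> (\<forall>c\<in>C. satisfies Z c)"

definition branch ::
  "'a set \<Rightarrow> ('a \<Rightarrow> 'a \<Rightarrow> bool) \<Rightarrow> 'a set \<Rightarrow> 'a constr set \<Rightarrow> 'a constr \<Rightarrow> 'a constr set" where
  "branch V E J C c =
     {(nbhd V E (fst c) \<inter> J, 1)}
     \<union> (if snd c \<ge> 2 then {(fst c \<inter> J, snd c - 1)} else {})
     \<union> {(X' \<inter> J, b') | X' b'. (X', b') \<in> C \<and> (X', b') \<noteq> c}"

fun Cfam ::
  "'a set \<Rightarrow> ('a \<Rightarrow> 'a \<Rightarrow> bool) \<Rightarrow> 'a set \<Rightarrow> nat \<Rightarrow> (nat \<Rightarrow> 'a set) \<Rightarrow> nat \<Rightarrow> 'a constr set set" where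
  "Cfam V E S k J 0 = {{(S, k)}}"
| "Cfam V E S k J (Suc i) =
     {branch V E (J (Suc i)) C c | C c. C \<in> Cfam V E S k J i \<and> c \<in> C}"

definition slide :: "('a \<Rightarrow> 'a \<Rightarrow> bool) \<Rightarrow> 'a set \<Rightarrow> 'a set \<Rightarrow> bool" where
  "slide E I I' \<longleftrightarrow> (\<exists>u v. u \<in> I \<and> v \<notin> I \<and> E u v \<and> I' = (I - {u}) \<union> {v})"

definition TS_reachable ::
  "'a set \<Rightarrow> ('a \<Rightarrow> 'a \<Rightarrow> bool) \<Rightarrow> nat \<Rightarrow> 'a set \<Rightarrow> 'a set \<Rightarrow> bool" where
  "TS_reachable V E k S Z \<longleftrightarrow>
     (\<exists>Is. Is \<noteq> [] \<and> hd Is = S \<and> last Is = Z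
        \<and> (\<forall>I\<in>set Is. indep V E I \<and> card I = k)
        \<and> (\<forall>j. Suc j < length Is \<longrightarrow> slide E (Is ! j) (Is ! Suc j)))"

end

theory Submission
  imports Defs
begin

definition cinv :: "'a set \<Rightarrow> nat \<Rightarrow> 'a constr set \<Rightarrow> bool" where
  "cinv JI k C \<longleftrightarrow> finite C \<and> (\<forall>c\<in>C. fst c \<subseteq> JI \<and> snd c \<ge> 1)
     \<and> (\<forall>c1\<in>C. \<forall>c2\<in>C. c1 \<noteq> c2 \<longrightarrow> fst c1 \<inter> fst c2 = {})
     \<and> (k \<le> sum snd C \<or> (\<exists>b. ({}, b) \<in> C))"

lemma branch_eq:
  "branch V E J C c = insert (nbhd V E (fst c) \<inter> J, 1)
     ((if 2 \<le> snd c then {(fst c \<inter> J, snd c - 1)} else {}) \<union> (\<lambda>p. (fst p \<inter> J, snd p)) ` (C - {c}))"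
proof -
  have "{(X' \<inter> J, b') |X' b'. (X', b') \<in> C \<and> (X', b') \<noteq> c} = (\<lambda>p. (fst p \<inter> J, snd p)) ` (C - {c})"
  proof (rule set_eqI, rule iffI)
    fix x assume "x \<in> {(X' \<inter> J, b') |X' b'. (X', b') \<in> C \<and> (X', b') \<noteq> c}"
    then obtain X' b' where "x = (X' \<inter> J, b')" "(X', b') \<in> C - {c}" by blast
    then show "x \<in> (\<lambda>p. (fst p \<inter> J, snd p)) ` (C - {c})" by (intro image_eqI[of _ _ "(X', b')"]) auto
  next
    fix x assume "x \<in> (\<lambda>p. (fst p \<inter> J, snd p)) ` (C - {c})"
    then obtain p where "x = (fst p \<inter> J, snd p)" "p \<in> C" "p \<noteq> c" by blast
    then show "x \<in> {(X' \<inter> J, b') |X' b'. (X', b') \<in> C \<and> (X', b') \<noteq> c}"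
      by (intro CollectI exI[of _ "fst p"] exI[of _ "snd p"]) simp
  qed
  then show ?thesis unfolding branch_def by auto
qed

lemma TS_snoc:
  assumes "TS_reachable V E k S Y" "indep V E Z" "card Z = k" "slide E Y Z"
  shows "TS_reachable V E k S Z"
proof -
  obtain Is where Is: "Is \<noteq> []" "hd Is = S" "last Is = Y" "\<forall>I\<in>set Is. indep V E I \<and> card I = k"
    "\<forall>j. Suc j < length Is \<longrightarrow> slide E (Is!j) (Is!Suc j)"
    using assms(1) unfolding TS_reachable_def by blast
  show ?thesis unfolding TS_reachable_def
  proof (intro exI[of _ "Is @ [Z]"] conjI allI impI)
    show "Is @ [Z] \<noteq> []" by simp
    show "hd (Is@[Z]) = S" using Is by simp
    show "last (Is@[Z]) = Z" by simp
    show "\<forall>I\<in>set (Is@[Z]). indep V E I \<and> card I = k" using Is assms by auto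
    fix j assume j: "Suc j < length (Is@[Z])"
    show "slide E ((Is@[Z])!j) ((Is@[Z])!Suc j)"
    proof (cases "Suc j < length Is")
      case True then show ?thesis using Is(5) by (simp add: nth_append)
    next
      case False
      then have jj: "j = length Is - 1" using j by simp
      then have "(Is@[Z])!j = Y" using Is(1,3) by (simp add: nth_append last_conv_nth)
      moreover have "(Is@[Z])!Suc j = Z" using jj Is(1) by (simp add: nth_append)
      ultimately show ?thesis using assms(4) by simp
    qed
  qed
qed

lemma branch_disj:
  assumes inv: "cinv JI k C" and cC: "c \<in> C" and ind: "indep V E JI"
    and p: "p \<in> branch V E J C c" and q: "q \<in> branch V E J C c" and pq: "p \<noteq> q"
  shows "fst p \<inter> fst q = {}"
proof -
  obtain X b where c: "c = (X, b)" by fastforce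
  have "fst c \<subseteq> JI" using inv cC unfolding cinv_def by blast
  then have XJ: "X \<subseteq> JI" using c by simp
  have D: "\<And>c1 c2. c1 \<in> C \<Longrightarrow> c2 \<in> C \<Longrightarrow> c1 \<noteq> c2 \<Longrightarrow> fst c1 \<inter> fst c2 = {}"
    using inv unfolding cinv_def by blast
  have sub: "\<And>c1. c1 \<in> C \<Longrightarrow> fst c1 \<subseteq> JI" using inv unfolding cinv_def by blast
  have NX: "nbhd V E X \<inter> X = {}" unfolding nbhd_def by auto
  have NX': "nbhd V E X \<inter> fst c1 = {}" if "c1 \<in> C" for c1
  proof -
    { fix y assume y: "y \<in> nbhd V E X" "y \<in> fst c1"
      then obtain u where "u \<in> X" "E u y" unfolding nbhd_def by auto
      moreover have "y \<in> JI" using sub[OF that] y by auto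
      ultimately have False using ind XJ unfolding indep_def by auto }
    then show ?thesis by auto
  qed
  define f where "f = (\<lambda>p::'a constr. (fst p \<inter> J, snd p))"
  have Bcase: "\<And>r. r \<in> (if 2 \<le> b then {(X \<inter> J, b - 1)} else {}) \<Longrightarrow> r = (X \<inter> J, b - 1)"
    by (auto split: if_splits)
  have memb: "\<And>r. r \<in> branch V E J C c \<Longrightarrow> r = (nbhd V E X \<inter> J, 1) \<or> r = (X \<inter> J, b - 1) \<or> (\<exists>c1\<in>C - {c}. r = f c1)"
    proof -
    fix r assume "r \<in> branch V E J C c"
    then have "r = (nbhd V E X \<inter> J, 1) \<or> r \<in> (if 2 \<le> b then {(X \<inter> J, b - 1)} else {}) \<or> r \<in> f ` (C - {c})"
      unfolding branch_eq c f_def fst_conv snd_conv by blast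
    then show "r = (nbhd V E X \<inter> J, 1) \<or> r = (X \<inter> J, b - 1) \<or> (\<exists>c1\<in>C - {c}. r = f c1)"
      using Bcase by blast
  qed
  have cX: "c1 \<in> C - {c} \<Longrightarrow> X \<inter> fst c1 = {}" for c1 using D[of c c1] cC c by auto
  from memb[OF p] show ?thesis
  proof (elim disjE bexE)
    assume pA: "p = (nbhd V E X \<inter> J, 1)"
    from memb[OF q] show ?thesis
    proof (elim disjE bexE)
      assume "q = (nbhd V E X \<inter> J, 1)" then show ?thesis using pA pq by simp
    next
      assume "q = (X \<inter> J, b - 1)" then show ?thesis using pA NX by auto
    next
      fix c1 assume "c1 \<in> C - {c}" "q = f c1" then show ?thesis using pA NX'[of c1] unfolding f_def by auto
    qed
  next
    assume pB: "p = (X \<inter> J, b - 1)"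
    from memb[OF q] show ?thesis
    proof (elim disjE bexE)
      assume "q = (nbhd V E X \<inter> J, 1)" then show ?thesis using pB NX by auto
    next
      assume "q = (X \<inter> J, b - 1)" then show ?thesis using pB pq by simp
    next
      fix c1 assume "c1 \<in> C - {c}" "q = f c1" then show ?thesis using pB cX[of c1] unfolding f_def by auto
    qed
  next
    fix c2 assume c2: "c2 \<in> C - {c}" "p = f c2"
    from memb[OF q] show ?thesis
    proof (elim disjE bexE)
      assume "q = (nbhd V E X \<inter> J, 1)" then show ?thesis using c2 NX'[of c2] unfolding f_def by auto
    next
      assume "q = (X \<inter> J, b - 1)" then show ?thesis using c2 cX[of c2] unfolding f_def by auto
    next
      fix c1 assume c1: "c1 \<in> C - {c}" "q = f c1"
      then have "c1 \<noteq> c2" using pq c2 by auto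
      then show ?thesis using D[of c1 c2] c1 c2 unfolding f_def by auto
    qed
  qed
qed

lemma branch_inv:
  assumes inv: "cinv JI k C" and cC: "c \<in> C" and ind: "indep V E JI"
  shows "cinv J k (branch V E J C c)"
proof -
  obtain X b where c: "c = (X, b)" by fastforce
  define f where "f = (\<lambda>p::'a constr. (fst p \<inter> J, snd p))"
  define A where "A = (nbhd V E X \<inter> J, 1::nat)"
  define Bs where "Bs = (if 2 \<le> b then {(X \<inter> J, b - 1)} else {})"
  have br: "branch V E J C c = insert A (Bs \<union> f ` (C - {c}))"
    unfolding branch_eq c f_def A_def Bs_def fst_conv snd_conv by blast
  have finC: "finite C" using inv unfolding cinv_def by blast
  have "fst c \<subseteq> JI" "snd c \<ge> 1" using inv cC unfolding cinv_def by blast+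
  then have XJ: "X \<subseteq> JI" and b1: "b \<ge> 1" using c by simp_all
  have D: "\<And>c1 c2. c1 \<in> C \<Longrightarrow> c2 \<in> C \<Longrightarrow> c1 \<noteq> c2 \<Longrightarrow> fst c1 \<inter> fst c2 = {}"
    using inv unfolding cinv_def by blast
  have sub: "\<And>c1. c1 \<in> C \<Longrightarrow> fst c1 \<subseteq> JI \<and> snd c1 \<ge> 1" using inv unfolding cinv_def by blast
  have NX: "nbhd V E X \<inter> X = {}" unfolding nbhd_def by auto
  have NX': "nbhd V E X \<inter> fst c1 = {}" if "c1 \<in> C" for c1
  proof -
    { fix y assume y: "y \<in> nbhd V E X" "y \<in> fst c1"
      then obtain u where "u \<in> X" "E u y" unfolding nbhd_def by auto
      moreover have "y \<in> JI" using sub[OF that] y by auto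
      ultimately have False using ind XJ unfolding indep_def by auto }
    then show ?thesis by auto
  qed
  have cX: "c1 \<in> C - {c} \<Longrightarrow> X \<inter> fst c1 = {}" for c1 using D[of c c1] cC c by auto
  have fin: "finite (branch V E J C c)" unfolding br Bs_def using finC by simp
  have sub': "\<forall>p\<in>branch V E J C c. fst p \<subseteq> J \<and> snd p \<ge> 1"
    unfolding br A_def Bs_def f_def using sub by auto
  have disj: "\<forall>c1\<in>branch V E J C c. \<forall>c2\<in>branch V E J C c. c1 \<noteq> c2 \<longrightarrow> fst c1 \<inter> fst c2 = {}"
    using branch_disj[OF inv cC ind] by blast
  have sumc: "k \<le> sum snd (branch V E J C c) \<or> (\<exists>b. ({}, b) \<in> branch V E J C c)"
  proof (cases "\<exists>b. ({}, b) \<in> branch V E J C c")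
    case True then show ?thesis by blast
  next
    case False
    then have ne: "\<And>p. p \<in> branch V E J C c \<Longrightarrow> fst p \<noteq> {}" by (metis prod.collapse)
    have Cgood: "k \<le> sum snd C"
    proof -
      { fix b0 assume b0: "({}, b0) \<in> C"
        have False
        proof (cases "c = ({}, b0)")
          case True
          then have "X = {}" using c by simp
          then have "fst A = {}" unfolding A_def nbhd_def by simp
          then show False using ne[of A] br by simp
        next
          case False
          then have "f ({}, b0) \<in> branch V E J C c" using b0 br by blast
          then show False using ne unfolding f_def by fastforce
        qed }
      then show ?thesis using inv unfolding cinv_def by blast
    qed
    have Abr: "A \<in> branch V E J C c" using br by simp
    have Anot: "A \<notin> Bs \<union> f ` (C - {c})"
    proof
      assume "A \<in> Bs \<union> f ` (C - {c})"
      then consider "A \<in> Bs" | c1 where "c1 \<in> C - {c}" "A = f c1" by blast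
      then show False
      proof cases
        case 1
        then have "nbhd V E X \<inter> J = X \<inter> J" unfolding A_def Bs_def by (auto split: if_splits)
        then have "fst A = {}" using NX unfolding A_def by auto
        then show False using ne[OF Abr] by simp
      next
        case 2
        then have "nbhd V E X \<inter> J = fst c1 \<inter> J" unfolding A_def f_def by simp
        then have "fst A = {}" using NX'[of c1] 2 unfolding A_def f_def by auto
        then show False using ne[OF Abr] by simp
      qed
    qed
    have BI: "Bs \<inter> f ` (C - {c}) = {}"
    proof (rule ccontr)
      assume "Bs \<inter> f ` (C - {c}) \<noteq> {}"
      then obtain c1 where c1: "c1 \<in> C - {c}" "f c1 \<in> Bs" by blast
      then have "f c1 = (X \<inter> J, b - 1)" unfolding Bs_def by (auto split: if_splits)
      then have "fst (f c1) = {}" using cX[OF c1(1)] unfolding f_def by auto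
      moreover have "f c1 \<in> branch V E J C c" using br c1 by blast
      ultimately show False using ne by blast
    qed
    have inj: "inj_on f (C - {c})"
    proof (rule inj_onI)
      fix c1 c2 assume c1: "c1 \<in> C - {c}" and c2: "c2 \<in> C - {c}" and eq: "f c1 = f c2"
      show "c1 = c2"
      proof (rule ccontr)
        assume "c1 \<noteq> c2"
        then have "fst c1 \<inter> fst c2 = {}" using D c1 c2 by blast
        then have "fst (f c1) = {}" using eq unfolding f_def by auto
        moreover have "f c1 \<in> branch V E J C c" using br c1 by blast
        ultimately show False using ne by blast
      qed
    qed
    have finB: "finite Bs" unfolding Bs_def by simp
    have "sum snd (branch V E J C c) = snd A + sum snd (Bs \<union> f ` (C - {c}))"
      unfolding br using Anot finB finC by (simp add: sum.insert)
    also have "\<dots> = 1 + sum snd Bs + sum snd (f ` (C - {c}))"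
      using BI finB finC by (simp add: sum.union_disjoint A_def)
    also have "sum snd (f ` (C - {c})) = sum snd (C - {c})"
      using sum.reindex[OF inj, of snd] unfolding f_def by (simp add: comp_def)
    also have "sum snd Bs = (if 2 \<le> b then b - 1 else 0)" unfolding Bs_def by simp
    also have "1 + (if 2 \<le> b then b - 1 else 0) = b" using b1 by auto
    also have "b + sum snd (C - {c}) = sum snd C"
      using sum.remove[OF finC cC, of snd] c by simp
    finally show ?thesis using Cgood by simp
  qed
  show ?thesis unfolding cinv_def using fin sub' disj sumc by blast
qed

lemma branch_cases:
  assumes "p \<in> branch V E J C c"
  shows "p = (nbhd V E (fst c) \<inter> J, 1) \<or> (2 \<le> snd c \<and> p = (fst c \<inter> J, snd c - 1))
         \<or> (\<exists>c1\<in>C - {c}. p = (fst c1 \<inter> J, snd c1))"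
  using assms unfolding branch_eq by (auto split: if_splits)

lemma branch_A: "(nbhd V E (fst c) \<inter> J, 1) \<in> branch V E J C c"
  unfolding branch_eq by simp

lemma branch_B: "2 \<le> snd c \<Longrightarrow> (fst c \<inter> J, snd c - 1) \<in> branch V E J C c"
  unfolding branch_eq by simp

lemma branch_F: "c1 \<in> C \<Longrightarrow> c1 \<noteq> c \<Longrightarrow> (fst c1 \<inter> J, snd c1) \<in> branch V E J C c"
  unfolding branch_eq by auto

lemma cover:
  assumes inv: "cinv JI k C" and sat: "satisfies_set Z C" and finZ: "finite Z" and cZ: "card Z = k"
  shows "Z \<subseteq> \<Union> (fst ` C)"
proof -
  have finC: "finite C" using inv unfolding cinv_def by blast
  have D: "\<forall>c1\<in>C. \<forall>c2\<in>C. c1 \<noteq> c2 \<longrightarrow> fst c1 \<inter> fst c2 = {}" using inv unfolding cinv_def by blast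
  have pos: "\<forall>c\<in>C. snd c \<ge> 1" using inv unfolding cinv_def by blast
  have notbad: "\<not> (\<exists>b. ({}, b) \<in> C)"
  proof
    assume "\<exists>b. ({}, b) \<in> C"
    then obtain b where b: "({}, b) \<in> C" by blast
    then have "card (Z \<inter> {}) = b" using sat unfolding satisfies_set_def satisfies_def by fastforce
    then show False using pos b by fastforce
  qed
  then have k: "k \<le> sum snd C" using inv unfolding cinv_def by blast
  have eq: "sum snd C = sum (\<lambda>c. card (Z \<inter> fst c)) C"
    using sat unfolding satisfies_set_def satisfies_def by simp
  have "sum (\<lambda>c. card (Z \<inter> fst c)) C = card (\<Union>c\<in>C. Z \<inter> fst c)"
    by (rule card_UN_disjoint[symmetric]) (use finC finZ D in blast)+
  also have "(\<Union>c\<in>C. Z \<inter> fst c) = Z \<inter> \<Union> (fst ` C)" by auto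
  finally have "card (Z \<inter> \<Union> (fst ` C)) \<ge> card Z" using k eq cZ by simp
  then have "Z \<inter> \<Union> (fst ` C) = Z"
    using card_subset_eq[OF finZ, of "Z \<inter> \<Union> (fst ` C)"] card_mono[OF finZ, of "Z \<inter> \<Union> (fst ` C)"] by auto
  then show ?thesis by blast
qed

lemma main:
  assumes G: "simple_graph V E" and k1: "k \<ge> 1"
    and indS: "indep V E S" and cS: "card S = k" and J0: "J 0 = S"
    and Jind: "\<forall>j\<in>{1..l}. indep V E (J j)"
  shows "i \<le> l \<Longrightarrow> C \<in> Cfam V E S k J i \<Longrightarrow> cinv (J i) k C \<and>
     (\<forall>Z. Z \<subseteq> J i \<longrightarrow> card Z = k \<longrightarrow> satisfies_set Z C \<longrightarrow> TS_reachable V E k S Z)"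
proof (induction i arbitrary: C)
  case 0
  then have C: "C = {(S, k)}" by simp
  have finV: "finite V" using G unfolding simple_graph_def by blast
  have finS: "finite S" using indS finV unfolding indep_def using finite_subset by blast
  have "cinv (J 0) k C" unfolding cinv_def C J0 using k1 by simp
  moreover
  { fix Z assume Z: "Z \<subseteq> J 0" "card Z = k"
    then have "Z = S" using card_subset_eq[OF finS, of Z] J0 cS by simp
    then have "TS_reachable V E k S Z" unfolding TS_reachable_def
      by (intro exI[of _ "[S]"]) (simp add: indS cS) }
  ultimately show ?case by blast
next
  case (Suc i)
  have finV: "finite V" using G unfolding simple_graph_def by blast
  have indJ: "indep V E (J j)" if "j \<le> l" for j
    using that Jind indS J0 by (cases j) auto
  obtain C0 c where C: "C = branch V E (J (Suc i)) C0 c" and C0: "C0 \<in> Cfam V E S k J i" and cC0: "c \<in> C0"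
    using Suc.prems by auto
  have IH: "cinv (J i) k C0"
    "\<And>Z. Z \<subseteq> J i \<Longrightarrow> card Z = k \<Longrightarrow> satisfies_set Z C0 \<Longrightarrow> TS_reachable V E k S Z"
    using Suc.IH[OF _ C0] Suc.prems by auto
  have indJi: "indep V E (J i)" using indJ Suc.prems by simp
  have indJ': "indep V E (J (Suc i))" using indJ Suc.prems by simp
  have invC: "cinv (J (Suc i)) k C" unfolding C by (rule branch_inv[OF IH(1) cC0 indJi])
  moreover
  { fix Z assume Zs: "Z \<subseteq> J (Suc i)" and cZ: "card Z = k" and sat: "satisfies_set Z C"
    define J' where "J' = J (Suc i)"
    obtain X b where c: "c = (X, b)" by fastforce
    have inv0: "cinv (J i) k C0" by (rule IH(1))
    have sub0: "\<And>p. p \<in> C0 \<Longrightarrow> fst p \<subseteq> J i \<and> snd p \<ge> 1" using inv0 unfolding cinv_def by blast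
    have D0: "\<And>p q. p \<in> C0 \<Longrightarrow> q \<in> C0 \<Longrightarrow> p \<noteq> q \<Longrightarrow> fst p \<inter> fst q = {}"
      using inv0 unfolding cinv_def by blast
    have XJ: "X \<subseteq> J i" and b1: "b \<ge> 1" using sub0[OF cC0] c by auto
    have ZV: "Z \<subseteq> V" using Zs indJ' unfolding indep_def by blast
    have finZ: "finite Z" using ZV finV finite_subset by blast
    have indZ: "indep V E Z" using Zs indJ' unfolding indep_def by blast
    have ZJ': "Z \<subseteq> J'" using Zs J'_def by simp
    have cov: "Z \<subseteq> \<Union> (fst ` C)" by (rule cover[OF invC sat finZ cZ])
    have satp: "\<And>p. p \<in> C \<Longrightarrow> card (Z \<inter> fst p) = snd p"
      using sat unfolding satisfies_set_def satisfies_def by blast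
    have "card (Z \<inter> (nbhd V E X \<inter> J')) = 1"
      using satp[of "(nbhd V E X \<inter> J', 1)"] branch_A[where V=V and E=E and J=J' and C=C0 and c=c] c C J'_def by simp
    then obtain w where w: "Z \<inter> (nbhd V E X \<inter> J') = {w}" by (rule card_1_singletonE)
    then have wZ: "w \<in> Z" and wN: "w \<in> nbhd V E X" by auto
    then obtain u where uX: "u \<in> X" and Euw: "E u w" and wX: "w \<notin> X" unfolding nbhd_def by auto
    have uJ: "u \<in> J i" using uX XJ by blast
    have uZ: "u \<notin> Z" using wZ Euw indZ unfolding indep_def by blast
    have memC: "\<And>y. y \<in> Z \<Longrightarrow> y \<noteq> w \<Longrightarrow> (2 \<le> b \<and> y \<in> X) \<or> (\<exists>c1\<in>C0 - {c}. y \<in> fst c1)"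
    proof -
      fix y assume yZ: "y \<in> Z" and yw: "y \<noteq> w"
      then obtain p where p: "p \<in> C" "y \<in> fst p" using cov by blast
      from branch_cases[OF p(1)[unfolded C]] c
      consider "p = (nbhd V E X \<inter> J', 1)" | "2 \<le> b" "p = (X \<inter> J', b - 1)"
        | c1 where "c1 \<in> C0 - {c}" "p = (fst c1 \<inter> J', snd c1)" unfolding J'_def by auto
      then show "(2 \<le> b \<and> y \<in> X) \<or> (\<exists>c1\<in>C0 - {c}. y \<in> fst c1)"
      proof cases
        case 1 then have "y \<in> Z \<inter> (nbhd V E X \<inter> J')" using p yZ by simp
        then show ?thesis using w yw by blast
      next
        case 2 then show ?thesis using p by auto
      next
        case 3 then show ?thesis using p by auto
      qed
    qed
    have cX: "\<And>c1. c1 \<in> C0 - {c} \<Longrightarrow> X \<inter> fst c1 = {}" using D0 cC0 c by fastforce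
    have cardZX: "card (Z \<inter> X) = b - 1"
    proof (cases "2 \<le> b")
      case True
      have "card (Z \<inter> (X \<inter> J')) = b - 1"
        using satp[of "(X \<inter> J', b - 1)"] branch_B[where V=V and E=E and J=J' and C=C0 and c=c] True c C J'_def by simp
      moreover have "Z \<inter> (X \<inter> J') = Z \<inter> X" using ZJ' by blast
      ultimately show ?thesis by simp
    next
      case False
      have "Z \<inter> X = {}"
      proof (rule ccontr)
        assume "Z \<inter> X \<noteq> {}"
        then obtain y where y: "y \<in> Z" "y \<in> X" by blast
        then have "y \<noteq> w" using wX by blast
        from memC[OF y(1) this] False y cX show False by blast
      qed
      then show ?thesis using False b1 by simp
    qed
    define Z' where "Z' = insert u (Z - {w})"
    have Z'J: "Z' \<subseteq> J i"
    proof
      fix y assume "y \<in> Z'"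
      then consider "y = u" | "y \<in> Z" "y \<noteq> w" unfolding Z'_def by blast
      then show "y \<in> J i"
      proof cases
        case 1 then show ?thesis using uJ by simp
      next
        case 2 from memC[OF 2] show ?thesis using XJ sub0 by blast
      qed
    qed
    have cZ': "card Z' = k"
    proof -
      have "card (Z - {w}) = k - 1" using cZ wZ finZ by simp
      moreover have "u \<notin> Z - {w}" using uZ by blast
      moreover have "k \<ge> 1" using k1 .
      ultimately show ?thesis unfolding Z'_def using finZ by simp
    qed
    have wJ: "w \<notin> J i"
    proof
      assume "w \<in> J i" then show False using uJ Euw indJi unfolding indep_def by blast
    qed
    have satZ': "satisfies_set Z' C0"
      unfolding satisfies_set_def satisfies_def
    proof
      fix p assume pC0: "p \<in> C0"
      show "card (Z' \<inter> fst p) = snd p"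
      proof (cases "p = c")
        case True
        have "Z' \<inter> X = insert u (Z \<inter> X)" unfolding Z'_def using uX wX by blast
        then have "card (Z' \<inter> X) = Suc (card (Z \<inter> X))" using uZ finZ by simp
        then show ?thesis using True c cardZX b1 by simp
      next
        case False
        have uP: "u \<notin> fst p" using cX[of p] pC0 False uX by blast
        have wP: "w \<notin> fst p" using sub0[OF pC0] wJ by blast
        have "Z' \<inter> fst p = Z \<inter> (fst p \<inter> J')" unfolding Z'_def using uP wP ZJ' by blast
        moreover have "card (Z \<inter> (fst p \<inter> J')) = snd p"
          using satp[of "(fst p \<inter> J', snd p)"] branch_F[OF pC0 False, where V=V and E=E and J=J'] C J'_def by simp
        ultimately show ?thesis by simp
      qed
    qed
    have reach': "TS_reachable V E k S Z'" by (rule IH(2)[OF Z'J cZ' satZ'])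
    have sl: "slide E Z' Z"
      unfolding slide_def
    proof (intro exI conjI)
      show "u \<in> Z'" unfolding Z'_def by simp
      show "w \<notin> Z'" unfolding Z'_def using uX wX by blast
      show "E u w" by (rule Euw)
      show "Z = Z' - {u} \<union> {w}" unfolding Z'_def using uZ wZ by blast
    qed
    have "TS_reachable V E k S Z" by (rule TS_snoc[OF reach' indZ cZ sl]) }
  ultimately show ?case by blast
qed

theorem lemma3p5:
  fixes V :: "'a set" and E :: "'a \<Rightarrow> 'a \<Rightarrow> bool"
    and S Z :: "'a set" and J :: "nat \<Rightarrow> 'a set" and k l i :: nat
  assumes "simple_graph V E"
    and "k \<ge> 1" and "l \<ge> 1"
    and "indep V E S" and "card S = k"
    and "J 0 = S"
    and "\<forall>j\<in>{1..l}. indep V E (J j)"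
    and "i \<le> l"
    and "Z \<subseteq> J i" and "indep V E Z" and "card Z = k"
    and "\<exists>C\<in>Cfam V E S k J i. satisfies_set Z C"
  shows "TS_reachable V E k S Z"
proof -
  obtain C where C: "C \<in> Cfam V E S k J i" "satisfies_set Z C" using assms(12) by blast
  show ?thesis
    using main[OF assms(1,2,4,5,6,7) assms(8) C(1)] assms(9,11) C(2) by blast
qed

end
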